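(* Let $\mathcal{N}$ be a Beeping Network with $n$ nodes and maximum degree $\Delta$, where each node has a unique ID from $[1,n^c]$ for a constant $c\ge1$ and each node knows $n$, $c$ and $\Delta$. There is a deterministic distributed algorithm (for the Beeping Network) that simulates any single round of any algorithm designed for the CONGEST model: if each node $u$ holds, for each neighbor $v\in N(u)$, a (possibly different) message $m_{u,v}$ of $O(\log n)$ bits, then after $O(\Delta^2\,\mathrm{polylog}\, n\,\log\Delta)$ beeping rounds, for every $u$ and every $v\in N(u)$, the node $v$ knows $m_{u,v}$ together with the ID of $u$. Here $\mathrm{polylog}\, n$ is a fixed polylogarithmic function of $n$.
   Context: A Beeping Network is a network of $n$ nodes whose topology is an undirected graph $G=(V,E)$; $N(v)$ is the neighbor set of $v$. Time is divided into synchronous rounds and all nodes start simultaneously. In each round every node either beeps or listens; a listening node hears "silence" if no neighbor beeps and "noise" if at least one neighbor beeps, and cannot distinguish one beep from several. The algorithm may be adaptive (decisions can depend on the silence/noise feedback heard so far). In the CONGEST model, in each round each node can send a possibly different message of $O(\log n)$ bits to each neighbor, and all such messages are received without collisions. *)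

theory Defs
  imports Complex_Main
begin

text \<open>Network: vertices are natural numbers (any finite graph is isomorphic to one),
  V finite vertex set, E symmetric irreflexive adjacency relation inside V.\<close>

definition network :: "nat set \<Rightarrow> (nat \<Rightarrow> nat \<Rightarrow> bool) \<Rightarrow> bool" where
  "network V E \<longleftrightarrow> finite V \<and> (\<forall>u v. E u v \<longrightarrow> u \<in> V \<and> v \<in> V)
      \<and> (\<forall>u v. E u v \<longrightarrow> E v u) \<and> (\<forall>u. \<not> E u u)"

definition degree :: "nat set \<Rightarrow> (nat \<Rightarrow> nat \<Rightarrow> bool) \<Rightarrow> nat \<Rightarrow> nat" where
  "degree V E v = card {u \<in> V. E v u}"

definition max_degree :: "nat set \<Rightarrow> (nat \<Rightarrow> nat \<Rightarrow> bool) \<Rightarrow> nat" where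
  "max_degree V E = Max (degree V E ` V)"

text \<open>A deterministic adaptive beeping protocol: in each round, a node decides to beep
  (True) or listen (False) as a function of its knowledge: n, c, Delta, its own ID,
  its local input (messages indexed by recipient ID), and the list of feedbacks heard
  so far.\<close>

type_synonym protocol =
  "nat \<Rightarrow> real \<Rightarrow> nat \<Rightarrow> nat \<Rightarrow> (nat \<Rightarrow> bool list) \<Rightarrow> bool list \<Rightarrow> bool"

fun beep_hist :: "protocol \<Rightarrow> real \<Rightarrow> nat set \<Rightarrow> (nat \<Rightarrow> nat \<Rightarrow> bool) \<Rightarrow> (nat \<Rightarrow> nat)
      \<Rightarrow> (nat \<Rightarrow> nat \<Rightarrow> bool list) \<Rightarrow> nat \<Rightarrow> nat \<Rightarrow> bool list" where
  "beep_hist P c V E idf inp 0 = (\<lambda>v. [])"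
| "beep_hist P c V E idf inp (Suc t) =
     (let h = beep_hist P c V E idf inp t;
          b = (\<lambda>w. P (card V) c (max_degree V E) (idf w) (inp w) (h w))
      in (\<lambda>v. h v @ [\<not> b v \<and> (\<exists>w\<in>V. E v w \<and> b w)]))"

end

theory Submission
  imports Defs "HOL-Computational_Algebra.Primes"
begin

fun blen :: "nat \<Rightarrow> nat" where
  "blen x = (if x = 0 then 0 else Suc (blen (x div 2)))"

declare blen.simps[simp del]

lemma blen_gt: "x < 2 ^ blen x"
proof (induction x rule: blen.induct)
  case (1 x)
  show ?case
  proof (cases "x = 0")
    case True then show ?thesis by (simp add: blen.simps)
  next
    case False
    then have "x div 2 < 2 ^ blen (x div 2)" using 1 by simp
    then show ?thesis using False by (subst blen.simps) auto
  qed
qed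

lemma blen_le: "x < 2 ^ k \<Longrightarrow> blen x \<le> k"
proof (induction x arbitrary: k rule: blen.induct)
  case (1 x)
  show ?case
  proof (cases "x = 0")
    case True then show ?thesis by (simp add: blen.simps)
  next
    case False
    then obtain k' where k: "k = Suc k'" using 1(2) by (cases k) auto
    have "x div 2 < 2 ^ k'" using 1(2) k by auto
    then have "blen (x div 2) \<le> k'" using 1(1) False by simp
    then show ?thesis using False k by (subst blen.simps) auto
  qed
qed

lemma blen_ge: "x \<ge> 1 \<Longrightarrow> 2 ^ (blen x - 1) \<le> x"
proof (induction x rule: blen.induct)
  case (1 x)
  show ?case
  proof (cases "x \<ge> 2")
    case True
    then have "2 ^ (blen (x div 2) - 1) \<le> x div 2" using 1 by simp
    moreover have "blen (x div 2) \<ge> 1" using True by (subst blen.simps) auto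
    ultimately show ?thesis using True
      by (subst blen.simps) (cases "blen (x div 2)"; auto)
  next
    case False
    then have "x = 1" using 1(2) by auto
    then show ?thesis by (simp add: blen.simps)
  qed
qed

lemma blen_mono: "x \<le> y \<Longrightarrow> blen x \<le> blen y"
  by (meson blen_gt blen_le le_less_trans)

lemma blen_mult: "blen (x * y) \<le> blen x + blen y"
proof -
  have "x * y < 2 ^ (blen x + blen y)"
  proof (cases "x = 0 \<or> y = 0")
    case True then show ?thesis by auto
  next
    case False
    have "x * y < 2 ^ blen x * 2 ^ blen y"
      using blen_gt[of x] blen_gt[of y] False by (intro mult_strict_mono) auto
    then show ?thesis by (simp add: power_add)
  qed
  then show ?thesis by (rule blen_le)
qed

lemma blen_self: "blen x \<le> x"
  by (rule blen_le) (simp add: less_exp)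

lemma blen_pos: "x \<ge> 1 \<Longrightarrow> blen x \<ge> 1"
  by (subst blen.simps) auto

lemma Suc_div_split: "(d::nat) > 0 \<Longrightarrow> Suc n div d = n div d + (if d dvd Suc n then 1 else 0)"
  by (simp add: div_Suc dvd_eq_mod_eq_0)

lemma mult_le_self:
  assumes "prime (p::nat)" "x > 0"
  shows "multiplicity p x \<le> x"
proof -
  have "p ^ multiplicity p x dvd x" by (rule multiplicity_dvd)
  then have "p ^ multiplicity p x \<le> x" using assms by (simp add: dvd_imp_le)
  moreover have "multiplicity p x < 2 ^ multiplicity p x" by (simp add: less_exp)
  moreover have "2 ^ multiplicity p x \<le> p ^ multiplicity p x"
    using assms prime_ge_2_nat power_mono by blast
  ultimately show ?thesis by linarith
qed

lemma mult_card:
  assumes "prime (p::nat)" "x > 0"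
  shows "multiplicity p x = card {i \<in> {1..x}. p ^ i dvd x}"
proof -
  have "{i \<in> {1..x}. p ^ i dvd x} = {1..multiplicity p x}"
  proof -
    have "p \<noteq> 1" using assms by auto
    then show ?thesis
      using assms mult_le_self[OF assms] power_dvd_iff_le_multiplicity[of x p]
      by (auto intro: order.trans)
  qed
  then show ?thesis by simp
qed

lemma legendre:
  assumes "prime (p::nat)"
  shows "multiplicity p (fact n :: nat) = (\<Sum>i\<in>{1..n}. n div p ^ i)"
proof (induction n)
  case 0
  then show ?case by simp
next
  case (Suc n)
  have p1: "p > 1" using assms prime_gt_1_nat by blast
  have "multiplicity p (fact (Suc n) :: nat) = multiplicity p (Suc n * fact n)"
    by (simp add: fact_Suc)
  also have "\<dots> = multiplicity p (Suc n) + multiplicity p (fact n :: nat)"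
    using assms by (intro prime_elem_multiplicity_mult_distrib) auto
  also have "multiplicity p (Suc n) = card {i \<in> {1..Suc n}. p ^ i dvd Suc n}"
    using assms by (intro mult_card) auto
  also have "\<dots> = (\<Sum>i\<in>{1..Suc n}. (if p ^ i dvd Suc n then 1 else 0))"
    using sum.inter_filter[of "{1..Suc n}" "\<lambda>_. (1::nat)" "\<lambda>i. p ^ i dvd Suc n"]
    by (simp only: card_eq_sum finite_atLeastAtMost)
  also have "multiplicity p (fact n :: nat) = (\<Sum>i\<in>{1..Suc n}. n div p ^ i)"
  proof -
    have "n < 2 ^ Suc n" using less_exp[of "Suc n"] by simp
    also have "(2::nat) ^ Suc n \<le> p ^ Suc n" using p1 by (intro power_mono) auto
    finally have "n < p ^ Suc n" .
    then have "n div p ^ Suc n = 0" by simp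
    then show ?thesis using Suc by simp
  qed
  also have "(\<Sum>i\<in>{1..Suc n}. (if p ^ i dvd Suc n then 1 else 0)) + (\<Sum>i\<in>{1..Suc n}. n div p ^ i)
      = (\<Sum>i\<in>{1..Suc n}. Suc n div p ^ i)"
    unfolding sum.distrib[symmetric]
    by (intro sum.cong refl) (subst Suc_div_split, use p1 in auto)
  finally show ?case .
qed

lemma binom_mult_bound:
  assumes p: "prime (p::nat)" and m: "m \<ge> 1"
  shows "p ^ multiplicity p (2*m choose m) \<le> 2*m"
proof (rule ccontr)
  define k where "k = multiplicity p (2*m choose m)"
  assume "\<not> p ^ multiplicity p (2*m choose m) \<le> 2*m"
  then have big: "p ^ k > 2*m" unfolding k_def by simp
  have p1: "p > 1" using p prime_gt_1_nat by blast
  have Cnz: "(2*m choose m) \<noteq> 0" by simp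
  have "fact m * fact (2*m - m) * (2*m choose m) = (fact (2*m) :: nat)"
    by (rule binomial_fact_lemma) simp
  then have eq: "fact m * fact m * (2*m choose m) = (fact (2*m) :: nat)" by simp
  have "multiplicity p (fact (2*m) :: nat) = multiplicity p (fact m * fact m * (2*m choose m) :: nat)"
    using eq by simp
  also have "\<dots> = multiplicity p (fact m :: nat) + multiplicity p (fact m :: nat) + k"
    unfolding k_def using p Cnz
    by (simp add: prime_elem_multiplicity_mult_distrib)
  finally have E: "(\<Sum>i\<in>{1..2*m}. 2*m div p ^ i) = 2 * (\<Sum>i\<in>{1..m}. m div p ^ i) + k"
    using legendre[OF p] by simp
  have ext: "(\<Sum>i\<in>{1..m}. m div p ^ i) = (\<Sum>i\<in>{1..2*m}. m div p ^ i)"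
  proof -
    have "(\<Sum>i\<in>{1..2*m}. m div p ^ i) = (\<Sum>i\<in>{1..m}. m div p ^ i) + (\<Sum>i\<in>{m<..2*m}. m div p ^ i)"
      by (subst sum.union_disjoint[symmetric]) (auto intro: sum.cong)
    moreover have "(\<Sum>i\<in>{m<..2*m}. m div p ^ i) = 0"
    proof (intro sum.neutral ballI)
      fix i assume "i \<in> {m<..2*m}"
      have "m < 2 ^ m" by (simp add: less_exp)
      also have "(2::nat) ^ m \<le> p ^ m" using p1 by (intro power_mono) auto
      also have "p ^ m \<le> p ^ i" using p1 \<open>i \<in> _\<close> by (intro power_increasing) auto
      finally show "m div p ^ i = 0" by simp
    qed
    ultimately show ?thesis by simp
  qed
  have trm: "2*m div p ^ i \<le> 2 * (m div p ^ i) + (if i < k then 1 else 0)" for i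
  proof (cases "i < k")
    case True
    have "2*m div p^i \<le> 2 * (m div p^i) + 1"
    proof -
      have d: "p ^ i > 0" using p1 by simp
      have e: "2*m = 2*(m mod p^i) + (2*(m div p^i)) * p^i"
      proof -
        have "m = m mod p^i + m div p^i * p^i" by (rule mod_div_mult_eq[symmetric])
        then show ?thesis by (metis add_mult_distrib2 mult.assoc)
      qed
      have "2*m div p^i = (2*(m mod p^i) + (2*(m div p^i)) * p^i) div p^i"
        using e by simp
      also have "\<dots> = 2*(m div p^i) + (2*(m mod p^i)) div p^i"
        using d div_mult_self2[of "p^i" "2*(m mod p^i)" "2*(m div p^i)"] by simp
      finally have "2*m div p^i = 2*(m div p^i) + (2*(m mod p^i)) div p^i" .
      moreover have "2*(m mod p^i) < 2 * p^i" using d by simp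
      then have "(2*(m mod p^i)) div p^i < 2" using d by (simp add: div_less_iff_less_mult)
      ultimately show ?thesis by simp
    qed
    then show ?thesis using True by simp
  next
    case False
    then have "p ^ k \<le> p ^ i" using p1 by (intro power_increasing) auto
    then have "2*m div p ^ i = 0" using big by simp
    then show ?thesis by simp
  qed
  have "(\<Sum>i\<in>{1..2*m}. 2*m div p ^ i) \<le> (\<Sum>i\<in>{1..2*m}. 2 * (m div p ^ i) + (if i < k then 1 else 0))"
    by (intro sum_mono trm)
  also have "\<dots> = 2 * (\<Sum>i\<in>{1..2*m}. m div p ^ i) + (\<Sum>i\<in>{1..2*m}. (if i < k then 1 else 0))"
    by (simp add: sum.distrib sum_distrib_left)
  also have "(\<Sum>i\<in>{1..2*m}. (if i < k then 1 else 0)) = card {i\<in>{1..2*m}. i < k}"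
    using sum.inter_filter[of "{1..2*m}" "\<lambda>_. (1::nat)" "\<lambda>i. i < k"]
    by (simp only: card_eq_sum finite_atLeastAtMost)
  also have "card {i\<in>{1..2*m}. i < k} \<le> card {1..<k}"
    by (intro card_mono) auto
  finally have "k \<le> k - 1" using E ext by simp
  then have "k = 0" by simp
  then show False using big m by simp
qed

lemma binom_le_pi:
  assumes m: "m \<ge> 1"
  shows "(2*m choose m) \<le> (2*m) ^ card {p. prime p \<and> p \<le> 2*m}"
proof -
  define C where "C = 2*m choose m"
  have Cnz: "C \<noteq> 0" unfolding C_def by simp
  have "C = (\<Prod>p\<in>prime_factors C. p ^ multiplicity p C)"
    using prod_prime_factors[OF Cnz] by simp
  also have "\<dots> \<le> (\<Prod>p\<in>prime_factors C. 2*m)"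
    by (intro prod_mono) (auto simp: C_def intro!: binom_mult_bound m)
  also have "\<dots> = (2*m) ^ card (prime_factors C)" by simp
  also have "\<dots> \<le> (2*m) ^ card {p. prime p \<and> p \<le> 2*m}"
  proof (intro power_increasing card_mono)
    show "finite {p. prime p \<and> p \<le> 2*m}" by simp
    show "prime_factors C \<subseteq> {p. prime p \<and> p \<le> 2*m}"
    proof
      fix p assume "p \<in> prime_factors C"
      then have pp: "prime p" "p dvd C" by (auto simp: prime_factors_dvd)
      have "fact m * fact (2*m - m) * C = (fact (2*m) :: nat)"
        unfolding C_def by (rule binomial_fact_lemma) simp
      then have "C dvd fact (2*m)" by (metis dvd_triv_right)
      then have "p dvd fact (2*m)" using pp dvd_trans by blast
      then have "p \<le> 2*m" using pp prime_dvd_fact_iff by blast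
      then show "p \<in> {p. prime p \<and> p \<le> 2*m}" using pp by simp
    qed
    show "1 \<le> 2*m" using m by simp
  qed
  finally show ?thesis unfolding C_def .
qed

definition cheb :: "nat \<Rightarrow> nat" where
  "cheb R = 2 * (R * (2 * (blen R + 3))) + 1"

lemma cheb_primes:
  assumes R: "R \<ge> 1"
  shows "card {p. prime p \<and> p < cheb R} \<ge> R"
proof (rule ccontr)
  assume "\<not> ?thesis"
  define s where "s = 2 * (blen R + 3)"
  define m where "m = R * s"
  have m1: "m \<ge> 1" using R unfolding m_def s_def by simp
  have set_eq: "{p. prime p \<and> p < cheb R} = {p. prime p \<and> p \<le> 2*m}"
    unfolding cheb_def m_def s_def by auto
  define pi where "pi = card {p. prime p \<and> p \<le> 2*m}"
  have piR: "pi + 1 \<le> R" using \<open>\<not> _\<close> set_eq unfolding pi_def by simp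
  have "4 ^ m \<le> (2*m choose m) * (2*m)"
  proof -
    have "4 ^ m / (2*real m) \<le> real ((2*m) choose m)"
      using central_binomial_lower_bound[of m] m1 by simp
    then have "real (4 ^ m) \<le> real ((2*m choose m) * (2*m))"
      using m1 by (simp add: field_simps)
    then show ?thesis by linarith
  qed
  also have "\<dots> \<le> (2*m) ^ pi * (2*m)"
    using binom_le_pi[OF m1] unfolding pi_def by simp
  also have "\<dots> = (2*m) ^ (pi + 1)" by simp
  also have "\<dots> \<le> (2*m) ^ R" using piR m1 by (intro power_increasing) auto
  also have "\<dots> \<le> (2 ^ s) ^ R"
  proof (intro power_mono)
    define b where "b = blen R"
    have b1: "b \<ge> 1" using R unfolding b_def by (rule blen_pos)
    have Rb: "R < 2 ^ b" unfolding b_def by (rule blen_gt)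
    have "b + 3 \<le> 2 * 2 ^ b"
    proof -
      have "b < 2 ^ b" by (simp add: less_exp)
      moreover have "(2::nat)^1 \<le> 2 ^ b" using b1 by (intro power_increasing) auto
      then have "3 \<le> (2::nat) ^ b + 1" by simp
      ultimately show ?thesis by linarith
    qed
    have "2*m = 4 * R * (b + 3)" unfolding m_def s_def b_def by simp
    also have "\<dots> \<le> 4 * 2^b * (b+3)" using Rb by (intro mult_le_mono1 mult_le_mono2) simp
    also have "\<dots> \<le> 4 * 2^b * (2 * 2^b)" using \<open>b + 3 \<le> _\<close> by (intro mult_le_mono2)
    also have "\<dots> \<le> 2 ^ s"
    proof -
      have "(2::nat) ^ s = 2^(b+3) * 2^(b+3)" unfolding s_def b_def
        by (metis mult_2 power_add)
      also have "\<dots> = 64 * (2^b * 2^b)" by (simp add: power_add)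
      finally show ?thesis by simp
    qed
    finally show "2*m \<le> 2^s" .
  qed simp
  also have "\<dots> = 2 ^ m" unfolding m_def by (metis power_mult mult.commute)
  finally have "(4::nat) ^ m \<le> 2 ^ m" .
  moreover have "(2::nat) ^ m < 4 ^ m" using m1 by (intro power_strict_mono) auto
  ultimately show False by linarith
qed

lemma primes_card_le:
  assumes "finite S" "\<forall>p\<in>S. prime (p::nat) \<and> p dvd D" "D > 0"
  shows "2 ^ card S \<le> D"
proof -
  have "(\<Prod>S) dvd D" using assms(1,2)
  proof (induction S rule: finite_induct)
    case empty then show ?case by simp
  next
    case (insert p S)
    have "coprime p (\<Prod>S)"
      using insert by (intro prod_coprime_right primes_coprime) auto
    then show ?case using insert by (simp add: divides_mult)
  qed
  then have "\<Prod>S \<le> D" using assms(3) by (simp add: dvd_imp_le)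
  moreover have "2 ^ card S \<le> \<Prod>S"
    using assms(1,2)
  proof (induction S rule: finite_induct)
    case empty then show ?case by simp
  next
    case (insert p S)
    then have "2 \<le> p" by (simp add: prime_ge_2_nat)
    then show ?case using insert by (simp add: mult_le_mono)
  qed
  ultimately show ?thesis by simp
qed

lemma agree_card:
  assumes "x \<noteq> y" "x < 2 ^ k" "y < 2 ^ k" "finite S"
    "\<forall>p\<in>S. prime (p::nat) \<and> x mod p = y mod p"
  shows "card S < k"
proof -
  define D where "D = (if x \<ge> y then x - y else y - x)"
  have D0: "D > 0" using assms(1) unfolding D_def by auto
  have Dk: "D < 2 ^ k" using assms(2,3) unfolding D_def by auto
  have "\<forall>p\<in>S. prime p \<and> p dvd D"
  proof
    fix p assume "p \<in> S"
    then have "prime p" "x mod p = y mod p" using assms(5) by auto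
    then show "prime p \<and> p dvd D" unfolding D_def
      using mod_eq_dvd_iff_nat[of y x p] mod_eq_dvd_iff_nat[of x y p] by auto
  qed
  then have "2 ^ card S \<le> D" using primes_card_le[OF assms(4) _ D0] by blast
  then have "(2::nat) ^ card S < 2 ^ k" using Dk by linarith
  then show ?thesis using power_strict_increasing_iff[of "2::nat" "card S" k] by simp
qed

lemma bits_sum: "(\<Sum>i<W. if odd ((z::nat) div 2^i) then 2^i else 0) = z mod 2^W"
proof (induction W)
  case 0 then show ?case by simp
next
  case (Suc W)
  have "z mod 2 ^ Suc W = 2^W * (z div 2^W mod 2) + z mod 2^W"
    using mod_mult2_eq[of z "2^W" 2] by (simp add: mult.commute)
  moreover have "2^W * (z div 2^W mod 2) = (if odd (z div 2^W) then 2^W else 0)"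
    by (simp add: odd_iff_mod_2_eq_one even_iff_mod_2_eq_zero)
  ultimately show ?case using Suc by simp
qed

definition idx :: "nat \<Rightarrow> nat \<Rightarrow> nat \<Rightarrow> nat \<Rightarrow> nat \<Rightarrow> nat \<Rightarrow> nat" where
  "idx M W p r i h = ((p * M + r) * W + i) * 2 + h"

lemma idx_props:
  assumes "p < M" "r < M" "i < W" "h < 2"
  shows "idx M W p r i h < M * M * W * 2"
    "idx M W p r i h mod 2 = h"
    "idx M W p r i h div 2 mod W = i"
    "idx M W p r i h div 2 div W mod M = r"
    "idx M W p r i h div 2 div W div M = p"
proof -
  have a: "(p * M + r) * W + i < M * M * W"
  proof -
    have "(p * M + r) * W + i < (p * M + r) * W + W" using assms by simp
    also have "\<dots> = (p * M + r + 1) * W" by simp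
    also have "\<dots> \<le> (M * M) * W"
    proof (intro mult_le_mono1)
      have "p * M + r + 1 \<le> p * M + M" using assms by simp
      also have "\<dots> = (p + 1) * M" by simp
      also have "\<dots> \<le> M * M" using assms by (intro mult_le_mono1) simp
      finally show "p * M + r + 1 \<le> M * M" .
    qed
    finally show ?thesis by simp
  qed
  show "idx M W p r i h < M * M * W * 2"
  proof -
    have "idx M W p r i h < ((p * M + r) * W + i) * 2 + 2" unfolding idx_def using assms by simp
    also have "\<dots> = ((p * M + r) * W + i + 1) * 2" by simp
    also have "\<dots> \<le> (M * M * W) * 2" using a by (intro mult_le_mono1) simp
    finally show ?thesis by simp
  qed
  have g1: "(x * 2 + h) mod (2::nat) = h" for x using assms(4) by presburger
  have g2: "(x * 2 + h) div (2::nat) = x" for x using assms(4) by presburger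
  show "idx M W p r i h mod 2 = h" unfolding idx_def by (rule g1)
  have d2: "idx M W p r i h div 2 = (p * M + r) * W + i" unfolding idx_def by (rule g2)
  show "idx M W p r i h div 2 mod W = i" using d2 assms by simp
  have dW: "idx M W p r i h div 2 div W = p * M + r" using d2 assms by simp
  show "idx M W p r i h div 2 div W mod M = r" using dW assms by simp
  show "idx M W p r i h div 2 div W div M = p" using dW assms by simp
qed

definition act :: "nat \<Rightarrow> nat \<Rightarrow> nat \<Rightarrow> nat \<Rightarrow> nat \<Rightarrow> nat \<Rightarrow> bool" where
  "act Nb M W x X t =
     (let h = t mod 2; i = t div 2 mod W; r = t div 2 div W mod M; p = t div 2 div W div M
      in prime p \<and> x mod p = r \<and> odd ((x + Nb * (X mod p)) div 2 ^ i) = (h = 0))"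

lemma act_idx:
  assumes "p < M" "r < M" "i < W" "h < 2"
  shows "act Nb M W x X (idx M W p r i h) =
           (prime p \<and> x mod p = r \<and> odd ((x + Nb * (X mod p)) div 2 ^ i) = (h = 0))"
  using idx_props[OF assms] unfolding act_def Let_def by simp

definition valid :: "bool list \<Rightarrow> nat \<Rightarrow> nat \<Rightarrow> nat \<Rightarrow> nat \<Rightarrow> bool" where
  "valid fl M W p r = (\<forall>i<W. fl ! (idx M W p r i 0) \<noteq> fl ! (idx M W p r i 1))"

definition val :: "bool list \<Rightarrow> nat \<Rightarrow> nat \<Rightarrow> nat \<Rightarrow> nat \<Rightarrow> nat" where
  "val fl M W p r = (\<Sum>i<W. if fl ! (idx M W p r i 0) then 2 ^ i else 0)"

definition Rcv :: "nat \<Rightarrow> nat \<Rightarrow> nat \<Rightarrow> nat \<Rightarrow> bool list \<Rightarrow> (nat \<times> nat \<times> nat) set" where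
  "Rcv Nb M W x fl = (\<lambda>(p, r). (val fl M W p r mod Nb, p, val fl M W p r div Nb)) `
      {(p, r). prime p \<and> p < M \<and> r < M \<and> x mod p \<noteq> r \<and> valid fl M W p r}"

definition heard :: "nat \<Rightarrow> nat \<Rightarrow> nat \<Rightarrow> nat \<Rightarrow> bool list \<Rightarrow> nat set" where
  "heard Nb M W x fl = fst ` Rcv Nb M W x fl"

definition decX :: "nat \<Rightarrow> nat \<Rightarrow> nat \<Rightarrow> nat \<Rightarrow> bool list \<Rightarrow> nat \<Rightarrow> nat \<Rightarrow> nat" where
  "decX Nb M W x fl Q y = (THE X. X < Q \<and> (\<forall>p \<rho>. (y, p, \<rho>) \<in> Rcv Nb M W x fl \<longrightarrow> X mod p = \<rho>))"

lemma finite_heard: "finite (heard Nb M W x fl)"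
proof -
  have "finite {(p, r). prime p \<and> p < M \<and> r < M \<and> x mod p \<noteq> r \<and> valid fl M W p r}"
    by (rule finite_subset[of _ "{..<M} \<times> {..<M}"]) auto
  then show ?thesis unfolding heard_def Rcv_def by simp
qed

locale phase =
  fixes V :: "nat set" and E :: "nat \<Rightarrow> nat \<Rightarrow> bool" and idf :: "nat \<Rightarrow> nat"
    and Nb M W :: nat and X :: "nat \<Rightarrow> nat" and v :: nat and fl :: "bool list"
  assumes irr: "\<And>u. \<not> E u u"
    and inj: "inj_on idf V"
    and ids: "\<And>u. u \<in> V \<Longrightarrow> idf u < Nb"
    and NbM: "Nb * M \<le> 2 ^ W"
    and W1: "W \<ge> 1"
    and vV: "v \<in> V"
    and fl: "\<And>t. t < M * M * W * 2 \<Longrightarrow>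
          fl ! t = (\<not> act Nb M W (idf v) (X v) t \<and> (\<exists>w\<in>V. E v w \<and> act Nb M W (idf w) (X w) t))"
begin

definition z :: "nat \<Rightarrow> nat \<Rightarrow> nat" where
  "z u p = idf u + Nb * (X u mod p)"

lemma z_lt: assumes "u \<in> V" "p < M" "p > 0" shows "z u p < 2 ^ W"
proof -
  have "X u mod p < p" using assms by simp
  then have "X u mod p \<le> M - 1" using assms by linarith
  then have "Nb * (X u mod p) \<le> Nb * (M - 1)" by simp
  moreover have "idf u < Nb" using ids assms by simp
  ultimately have "z u p < Nb + Nb * (M - 1)" unfolding z_def by linarith
  also have "\<dots> = Nb * M" using assms by (cases M) auto
  finally show ?thesis using NbM by simp
qed

lemma z_mod: assumes "u \<in> V" shows "z u p mod Nb = idf u" "z u p div Nb = X u mod p"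
  using ids[OF assms] unfolding z_def by auto

lemma fl_slot:
  assumes "p < M" "r < M" "i < W" "h < 2" "prime p" "idf v mod p \<noteq> r"
  shows "fl ! idx M W p r i h =
     (\<exists>w\<in>V. E v w \<and> idf w mod p = r \<and> odd (z w p div 2 ^ i) = (h = 0))"
  using fl[OF idx_props(1)[OF assms(1-4)]] act_idx[OF assms(1-4)] assms(5,6)
  unfolding z_def by auto

lemma rcv_sound:
  assumes "(y, p, \<rho>) \<in> Rcv Nb M W (idf v) fl"
  shows "\<exists>u\<in>V. E v u \<and> y = idf u \<and> \<rho> = X u mod p \<and> prime p \<and> p < M"
proof -
  obtain r where pr: "prime p" "p < M" "r < M" "idf v mod p \<noteq> r" "valid fl M W p r"
    and y: "y = val fl M W p r mod Nb" and rho: "\<rho> = val fl M W p r div Nb"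
    using assms unfolding Rcv_def by auto
  have "fl ! idx M W p r 0 0 \<noteq> fl ! idx M W p r 0 1" using pr(5) W1 unfolding valid_def by auto
  then obtain u where u: "u \<in> V" "E v u" "idf u mod p = r"
    using fl_slot[OF pr(2,3) _ _ pr(1,4), of 0] W1 by fastforce
  have bits: "fl ! idx M W p r i 0 = odd (z u p div 2 ^ i)" if "i < W" for i
  proof -
    have a: "fl ! idx M W p r i 0 = (\<exists>w\<in>V. E v w \<and> idf w mod p = r \<and> odd (z w p div 2 ^ i))"
      using fl_slot[OF pr(2,3) that _ pr(1,4), of 0] by simp
    have b: "fl ! idx M W p r i 1 = (\<exists>w\<in>V. E v w \<and> idf w mod p = r \<and> \<not> odd (z w p div 2 ^ i))"
      using fl_slot[OF pr(2,3) that _ pr(1,4), of 1] by simp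
    have "fl ! idx M W p r i 0 \<noteq> fl ! idx M W p r i 1" using pr(5) that unfolding valid_def by auto
    then show ?thesis using a b u by blast
  qed
  have "val fl M W p r = (\<Sum>i<W. if odd (z u p div 2^i) then 2^i else 0)"
    unfolding val_def using bits by (intro sum.cong) auto
  also have "\<dots> = z u p mod 2 ^ W" by (rule bits_sum)
  also have "\<dots> = z u p" using z_lt[OF u(1) pr(2)] pr(1) prime_gt_0_nat by simp
  finally have "val fl M W p r = z u p" .
  then show ?thesis using y rho z_mod[OF u(1)] u pr by auto
qed

lemma rcv_complete:
  assumes u: "u \<in> V" "E v u" and p: "prime p" "p < M"
    and clean: "\<forall>w\<in>V. (w = v \<or> E v w) \<and> w \<noteq> u \<longrightarrow> idf w mod p \<noteq> idf u mod p"
  shows "(idf u, p, X u mod p) \<in> Rcv Nb M W (idf v) fl"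
proof -
  define r where "r = idf u mod p"
  have "r < p" unfolding r_def using p prime_gt_0_nat by simp
  then have rp: "r < M" using p by linarith
  have vu: "v \<noteq> u" using u irr by auto
  have vr: "idf v mod p \<noteq> r" using clean vV vu unfolding r_def by auto
  have slot: "fl ! idx M W p r i h = (odd (z u p div 2 ^ i) = (h = 0))" if "i < W" "h < 2" for i h
  proof -
    have "fl ! idx M W p r i h =
       (\<exists>w\<in>V. E v w \<and> idf w mod p = r \<and> odd (z w p div 2 ^ i) = (h = 0))"
      by (rule fl_slot[OF p(2) rp that p(1) vr])
    also have "\<dots> = (odd (z u p div 2 ^ i) = (h = 0))"
      using clean u unfolding r_def by auto
    finally show ?thesis .
  qed
  have valid: "valid fl M W p r" unfolding valid_def using slot by auto
  have "val fl M W p r = (\<Sum>i<W. if odd (z u p div 2^i) then 2^i else 0)"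
    unfolding val_def using slot by (intro sum.cong) auto
  also have "\<dots> = z u p mod 2 ^ W" by (rule bits_sum)
  also have "\<dots> = z u p" using z_lt[OF u(1) p(2)] p(1) prime_gt_0_nat by simp
  finally have vz: "val fl M W p r = z u p" .
  have "(val fl M W p r mod Nb, p, val fl M W p r div Nb) \<in> Rcv Nb M W (idf v) fl"
    unfolding Rcv_def by (rule image_eqI[where x="(p, r)"]) (use p rp vr valid in auto)
  then show ?thesis using vz z_mod[OF u(1)] by simp
qed

end

context phase
begin

definition CP :: "nat \<Rightarrow> nat set" where
  "CP u = {p. prime p \<and> p < M \<and> (\<forall>w\<in>V. (w = v \<or> E v w) \<and> w \<noteq> u \<longrightarrow> idf w mod p \<noteq> idf u mod p)}"

lemma CP_card:
  assumes u: "u \<in> V" "E v u" and Lg: "\<forall>w\<in>V. idf w < 2 ^ Lg" and finV: "finite V"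
  shows "card {p. prime p \<and> p < M} \<le> card (CP u) + card {w\<in>V. E v w} * Lg"
proof -
  define N where "N = {w\<in>V. E v w}"
  define Ws where "Ws = {w\<in>V. (w = v \<or> E v w) \<and> w \<noteq> u}"
  define B where "B w = {p. prime p \<and> p < M \<and> idf w mod p = idf u mod p}" for w
  have fN: "finite N" using finV unfolding N_def by simp
  have sub: "{p. prime p \<and> p < M} \<subseteq> CP u \<union> (\<Union>w\<in>Ws. B w)"
  proof
    fix p assume p: "p \<in> {p. prime p \<and> p < M}"
    show "p \<in> CP u \<union> (\<Union>w\<in>Ws. B w)"
    proof (cases "p \<in> CP u")
      case False
      then obtain w where "w \<in> V" "(w = v \<or> E v w) \<and> w \<noteq> u" "idf w mod p = idf u mod p"
        using p unfolding CP_def by blast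
      then have "w \<in> Ws" "p \<in> B w" using p unfolding Ws_def B_def by auto
      then show ?thesis by blast
    qed simp
  qed
  have fWs: "finite Ws" using finV unfolding Ws_def by simp
  have fB: "finite (B w)" for w unfolding B_def by simp
  have cB: "card (B w) \<le> Lg" if "w \<in> Ws" for w
  proof -
    have "w \<in> V" "w \<noteq> u" using that unfolding Ws_def by auto
    then have "idf w \<noteq> idf u" using inj_onD[OF inj _ \<open>w \<in> V\<close> u(1)] by blast
    then have "card (B w) < Lg"
    proof -
      have "\<forall>p\<in>B w. prime p \<and> idf w mod p = idf u mod p" unfolding B_def by blast
      then show ?thesis
        using agree_card[OF \<open>idf w \<noteq> idf u\<close> Lg[rule_format, OF \<open>w \<in> V\<close>] Lg[rule_format, OF u(1)] fB]
        by blast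
    qed
    then show ?thesis by simp
  qed
  have cWs: "card Ws \<le> card N"
  proof -
    have "Ws \<subseteq> insert v N - {u}" unfolding Ws_def N_def using vV by auto
    then have "card Ws \<le> card (insert v N - {u})" using fN by (intro card_mono) auto
    also have "\<dots> = card (insert v N) - 1" using u unfolding N_def by (intro card_Diff_singleton) auto
    also have "\<dots> \<le> card N" using fN by (simp add: card_insert_if)
    finally show ?thesis .
  qed
  have "card {p. prime p \<and> p < M} \<le> card (CP u \<union> (\<Union>w\<in>Ws. B w))"
  proof (rule card_mono[OF _ sub])
    have "finite (CP u)" unfolding CP_def by simp
    then show "finite (CP u \<union> (\<Union>w\<in>Ws. B w))" using fB fWs by blast
  qed
  also have "\<dots> \<le> card (CP u) + card (\<Union>w\<in>Ws. B w)" by (rule card_Un_le)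
  also have "card (\<Union>w\<in>Ws. B w) \<le> (\<Sum>w\<in>Ws. card (B w))" by (rule card_UN_le[OF fWs])
  also have "\<dots> \<le> (\<Sum>w\<in>Ws. Lg)" using cB by (intro sum_mono) auto
  also have "\<dots> = card Ws * Lg" by simp
  also have "\<dots> \<le> card N * Lg" using cWs by simp
  finally show ?thesis unfolding N_def by simp
qed

lemma heard_eq:
  assumes "\<And>u. u \<in> V \<Longrightarrow> E v u \<Longrightarrow> CP u \<noteq> {}"
  shows "heard Nb M W (idf v) fl = idf ` {u\<in>V. E v u}"
proof
  show "heard Nb M W (idf v) fl \<subseteq> idf ` {u\<in>V. E v u}"
  proof
    fix y assume "y \<in> heard Nb M W (idf v) fl"
    then obtain p \<rho> where "(y, p, \<rho>) \<in> Rcv Nb M W (idf v) fl" unfolding heard_def by force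
    from rcv_sound[OF this] obtain u where "u \<in> V" "E v u" "y = idf u" by blast
    then show "y \<in> idf ` {u\<in>V. E v u}" by blast
  qed
  show "idf ` {u\<in>V. E v u} \<subseteq> heard Nb M W (idf v) fl"
  proof
    fix y assume "y \<in> idf ` {u\<in>V. E v u}"
    then obtain u where u: "u \<in> V" "E v u" "y = idf u" by auto
    obtain p where "p \<in> CP u" using assms[OF u(1,2)] by auto
    then have "(idf u, p, X u mod p) \<in> Rcv Nb M W (idf v) fl"
      unfolding CP_def by (intro rcv_complete u) auto
    then show "y \<in> heard Nb M W (idf v) fl" unfolding heard_def using u(3) by force
  qed
qed

lemma dec_eq:
  assumes u: "u \<in> V" "E v u" and XQ: "X u < Q" and QB: "Q \<le> 2 ^ B" and cp: "card (CP u) \<ge> B"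
  shows "decX Nb M W (idf v) fl Q (idf u) = X u"
  unfolding decX_def
proof (rule the_equality)
  show "X u < Q \<and> (\<forall>p \<rho>. (idf u, p, \<rho>) \<in> Rcv Nb M W (idf v) fl \<longrightarrow> X u mod p = \<rho>)"
  proof (intro conjI allI impI XQ)
    fix p \<rho> assume "(idf u, p, \<rho>) \<in> Rcv Nb M W (idf v) fl"
    then obtain u' where u': "u' \<in> V" "E v u'" "idf u = idf u'" "\<rho> = X u' mod p"
      using rcv_sound by blast
    then have "u' = u" using inj_onD[OF inj u'(3)[symmetric] u'(1) u(1)] by simp
    then show "X u mod p = \<rho>" using u' by simp
  qed
next
  fix X' assume X': "X' < Q \<and> (\<forall>p \<rho>. (idf u, p, \<rho>) \<in> Rcv Nb M W (idf v) fl \<longrightarrow> X' mod p = \<rho>)"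
  show "X' = X u"
  proof (rule ccontr)
    assume ne: "X' \<noteq> X u"
    have "\<forall>p\<in>CP u. prime p \<and> X' mod p = X u mod p"
    proof
      fix p assume "p \<in> CP u"
      then have "(idf u, p, X u mod p) \<in> Rcv Nb M W (idf v) fl" "prime p"
        unfolding CP_def by (auto intro!: rcv_complete u)
      then show "prime p \<and> X' mod p = X u mod p" using X' by blast
    qed
    moreover have "finite (CP u)" unfolding CP_def by simp
    ultimately have "card (CP u) < B"
      using agree_card[of X' "X u" B "CP u"] ne X' XQ QB by linarith
    then show False using cp by simp
  qed
qed

end

lemma hist_len: "length (beep_hist P c V E idf inp t v) = t"
  by (induction t arbitrary: v) (auto simp: Let_def)

lemma hist_take: "t' \<le> t \<Longrightarrow> take t' (beep_hist P c V E idf inp t v) = beep_hist P c V E idf inp t' v"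
proof (induction t arbitrary: v)
  case 0 then show ?case by simp
next
  case (Suc t)
  show ?case
  proof (cases "t' = Suc t")
    case True then show ?thesis using hist_len by (metis take_all order_refl)
  next
    case False
    then have "t' \<le> t" using Suc by simp
    then show ?thesis using Suc hist_len[of P c V E idf inp t v] by (simp add: Let_def)
  qed
qed

lemma hist_nth:
  assumes "t' < t"
  shows "beep_hist P c V E idf inp t v ! t' =
    (\<not> P (card V) c (max_degree V E) (idf v) (inp v) (beep_hist P c V E idf inp t' v) \<and>
      (\<exists>w\<in>V. E v w \<and> P (card V) c (max_degree V E) (idf w) (inp w) (beep_hist P c V E idf inp t' w)))"
proof -
  have "beep_hist P c V E idf inp t v ! t' = take (Suc t') (beep_hist P c V E idf inp t v) ! t'"
    by simp
  also have "\<dots> = beep_hist P c V E idf inp (Suc t') v ! t'"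
    using assms by (subst hist_take) auto
  finally show ?thesis
    using hist_len[of P c V E idf inp t' v] by (simp add: Let_def nth_append)
qed

definition Lgf :: "real \<Rightarrow> nat \<Rightarrow> nat" where "Lgf c n = nat \<lceil>c\<rceil> * blen n"
definition Lmf :: "nat \<Rightarrow> nat \<Rightarrow> nat" where "Lmf K n = K * (nat \<lceil>log 2 (real n)\<rceil> + 1)"
definition Payf :: "real \<Rightarrow> nat \<Rightarrow> nat \<Rightarrow> nat \<Rightarrow> (nat \<times> bool list) list set" where
  "Payf c K n D = {xs. length xs \<le> D \<and> (\<forall>(x, m)\<in>set xs. x < 2 ^ Lgf c n \<and> length m \<le> Lmf K n)}"
definition Bqf :: "real \<Rightarrow> nat \<Rightarrow> nat \<Rightarrow> nat \<Rightarrow> nat" where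
  "Bqf c K n D = (D + 1) * (Lgf c n + Lmf K n + 2)"
definition Rf :: "real \<Rightarrow> nat \<Rightarrow> nat \<Rightarrow> nat \<Rightarrow> nat" where
  "Rf c K n D = D * Lgf c n + Bqf c K n D + 1"
definition Mf :: "real \<Rightarrow> nat \<Rightarrow> nat \<Rightarrow> nat \<Rightarrow> nat" where
  "Mf c K n D = cheb (Rf c K n D)"
definition Wf :: "real \<Rightarrow> nat \<Rightarrow> nat \<Rightarrow> nat \<Rightarrow> nat" where
  "Wf c K n D = Lgf c n + blen (Mf c K n D)"
definition Tpf :: "real \<Rightarrow> nat \<Rightarrow> nat \<Rightarrow> nat \<Rightarrow> nat" where
  "Tpf c K n D = Mf c K n D * Mf c K n D * Wf c K n D * 2"
definition Tf :: "real \<Rightarrow> nat \<Rightarrow> nat \<Rightarrow> nat \<Rightarrow> nat" where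
  "Tf c K n D = (if D < n then 2 * Tpf c K n D else 0)"
definition encf :: "real \<Rightarrow> nat \<Rightarrow> nat \<Rightarrow> nat \<Rightarrow> (nat \<times> bool list) list \<Rightarrow> nat" where
  "encf c K n D = (SOME g. bij_betw g (Payf c K n D) {0..<card (Payf c K n D)})"

definition X1f :: "real \<Rightarrow> nat \<Rightarrow> nat \<Rightarrow> nat \<Rightarrow> nat \<Rightarrow> (nat \<Rightarrow> bool list) \<Rightarrow> bool list \<Rightarrow> nat" where
  "X1f c K n D x f fl = encf c K n D
     (map (\<lambda>y. (y, f y)) (sorted_list_of_set (heard (2 ^ Lgf c n) (Mf c K n D) (Wf c K n D) x fl)))"

definition Pf :: "real \<Rightarrow> nat \<Rightarrow> protocol" where
  "Pf c K n c' D x f h =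
    (let Tp = Tpf c K n D; t = length h; Nb = 2 ^ Lgf c n; M = Mf c K n D; W = Wf c K n D in
     if t < Tp then act Nb M W x 0 t
     else if t < 2 * Tp then act Nb M W x (X1f c K n D x f (take Tp h)) (t - Tp)
     else False)"

definition outf :: "real \<Rightarrow> nat \<Rightarrow> nat \<Rightarrow> real \<Rightarrow> nat \<Rightarrow> nat \<Rightarrow> (nat \<Rightarrow> bool list) \<Rightarrow> bool list
     \<Rightarrow> (nat \<times> bool list) set" where
  "outf c K n c' D x f h =
    (let Tp = Tpf c K n D; Nb = 2 ^ Lgf c n; M = Mf c K n D; W = Wf c K n D;
         fl = drop Tp h; Q = card (Payf c K n D) in
     (\<lambda>y. (y, the (map_of (the_inv_into (Payf c K n D) (encf c K n D) (decX Nb M W x fl Q y)) x)))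
       ` heard Nb M W x fl)"

lemma sum_pow2_lt: "(\<Sum>i\<le>L. (2::nat) ^ i) < 2 ^ Suc L"
  by (induction L) auto

lemma card_bool_lists: "card {m :: bool list. set m \<subseteq> UNIV \<and> length m \<le> L} < 2 ^ Suc L"
  using card_lists_length_le[of "UNIV :: bool set" L] sum_pow2_lt[of L] by simp

lemma finite_Pay: "finite (Payf c K n D)"
proof -
  define A where "A = {..<(2::nat) ^ Lgf c n} \<times> {m :: bool list. set m \<subseteq> UNIV \<and> length m \<le> Lmf K n}"
  have fA: "finite A" unfolding A_def using finite_lists_length_le[of "UNIV :: bool set"] by simp
  have "Payf c K n D \<subseteq> {xs. set xs \<subseteq> A \<and> length xs \<le> D}" unfolding Payf_def A_def by auto
  then show ?thesis using finite_lists_length_le[OF fA] finite_subset by blast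
qed

lemma card_Pay: "card (Payf c K n D) < 2 ^ Bqf c K n D"
proof -
  define a where "a = Lgf c n + Lmf K n + 1"
  define A where "A = {..<(2::nat) ^ Lgf c n} \<times> {m :: bool list. set m \<subseteq> UNIV \<and> length m \<le> Lmf K n}"
  have fA: "finite A" unfolding A_def using finite_lists_length_le[of "UNIV :: bool set"] by simp
  have cA: "card A \<le> 2 ^ a"
  proof -
    have "card A = 2 ^ Lgf c n * card {m :: bool list. set m \<subseteq> UNIV \<and> length m \<le> Lmf K n}"
      unfolding A_def by (simp add: card_cartesian_product)
    also have "\<dots> \<le> 2 ^ Lgf c n * 2 ^ Suc (Lmf K n)"
      using card_bool_lists[of "Lmf K n"] by (intro mult_le_mono2) simp
    also have "\<dots> = 2 ^ a" unfolding a_def by (simp add: power_add)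
    finally show ?thesis .
  qed
  have "Payf c K n D \<subseteq> {xs. set xs \<subseteq> A \<and> length xs \<le> D}" unfolding Payf_def A_def by auto
  then have "card (Payf c K n D) \<le> card {xs. set xs \<subseteq> A \<and> length xs \<le> D}"
    using finite_lists_length_le[OF fA] by (intro card_mono) auto
  also have "\<dots> = (\<Sum>i\<le>D. card A ^ i)" by (rule card_lists_length_le[OF fA])
  also have "\<dots> \<le> (\<Sum>i\<le>D. (2 ^ a) ^ D)"
  proof (intro sum_mono)
    fix i assume "i \<in> {..D}"
    have "card A ^ i \<le> (2 ^ a) ^ i" using cA by (intro power_mono) auto
    also have "((2::nat) ^ a) ^ i \<le> (2 ^ a) ^ D" using \<open>i \<in> _\<close> by (intro power_increasing) auto
    finally show "card A ^ i \<le> (2 ^ a) ^ D" .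
  qed
  also have "\<dots> = (D + 1) * 2 ^ (a * D)" by (simp add: power_mult)
  also have "\<dots> < 2 ^ (D + 1) * 2 ^ (a * D)"
  proof -
    have "D + 1 < 2 ^ (D + 1)" by (rule less_exp)
    moreover have "(0::nat) < 2 ^ (a * D)" by simp
    ultimately show ?thesis by (rule mult_strict_right_mono)
  qed
  also have "\<dots> = 2 ^ (D + 1 + a * D)" by (simp add: power_add)
  also have "\<dots> \<le> 2 ^ Bqf c K n D"
    unfolding Bqf_def a_def by (intro power_increasing) (auto simp: algebra_simps)
  finally show ?thesis .
qed

lemma enc_bij: "bij_betw (encf c K n D) (Payf c K n D) {0..<card (Payf c K n D)}"
  unfolding encf_def using ex_bij_betw_finite_nat[OF finite_Pay] by (rule someI_ex)

lemma P_ph0: "length h < Tpf c K n D \<Longrightarrow>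
   Pf c K n c' D x f h = act (2 ^ Lgf c n) (Mf c K n D) (Wf c K n D) x 0 (length h)"
  unfolding Pf_def Let_def by simp

lemma P_ph1: "Tpf c K n D \<le> length h \<Longrightarrow> length h < 2 * Tpf c K n D \<Longrightarrow>
   Pf c K n c' D x f h = act (2 ^ Lgf c n) (Mf c K n D) (Wf c K n D) x
       (X1f c K n D x f (take (Tpf c K n D) h)) (length h - Tpf c K n D)"
  unfolding Pf_def Let_def by simp

lemma ids_bound:
  assumes c1: "c \<ge> 1" and n1: "n \<ge> 1" and x: "real x \<le> real n powr c"
  shows "x < 2 ^ Lgf c n"
proof -
  define cc where "cc = nat \<lceil>c\<rceil>"
  have ccr: "real cc \<ge> c" unfolding cc_def using c1 by linarith
  have cc1: "cc \<ge> 1" unfolding cc_def using c1 by linarith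
  have "real x \<le> real n powr c" by (rule x)
  also have "\<dots> \<le> real n powr (real cc)" using n1 ccr by (intro powr_mono) auto
  also have "\<dots> = real n ^ cc" using n1 by (intro powr_realpow) auto
  also have "\<dots> < (2 ^ blen n) ^ cc"
  proof -
    have "real n < 2 ^ blen n" using blen_gt[of n] by (metis of_nat_less_iff of_nat_numeral of_nat_power)
    then show ?thesis using cc1 n1 by (intro power_strict_mono) auto
  qed
  also have "\<dots> = real (2 ^ Lgf c n)" unfolding Lgf_def cc_def[symmetric]
    by (simp add: power_mult[symmetric] mult.commute)
  finally show ?thesis by linarith
qed

lemma deg_facts:
  assumes net: "network V E" and vV: "v \<in> V"
  shows "\<forall>w\<in>V. card {u\<in>V. E w u} \<le> max_degree V E" "max_degree V E < card V"
proof -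
  have finV: "finite V" using net unfolding network_def by simp
  show "\<forall>w\<in>V. card {u\<in>V. E w u} \<le> max_degree V E"
    unfolding max_degree_def degree_def[symmetric] using finV by auto
  have "max_degree V E \<in> degree V E ` V"
    unfolding max_degree_def using finV vV by (intro Max_in) auto
  then obtain w where w: "w \<in> V" "max_degree V E = card {u\<in>V. E w u}"
    unfolding degree_def by auto
  have "{u\<in>V. E w u} \<subseteq> V - {w}" using net unfolding network_def by auto
  then have "card {u\<in>V. E w u} \<le> card (V - {w})" using finV by (intro card_mono) auto
  also have "\<dots> < card V" using finV w(1) by (meson card_Diff1_less)
  finally show "max_degree V E < card V" using w(2) by simp
qed

lemma main_correct:
  fixes c :: real and K :: nat
  assumes c1: "c \<ge> 1" and net: "network V E" and inj: "inj_on idf V"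
    and idb: "\<forall>v\<in>V. 1 \<le> idf v \<and> real (idf v) \<le> real (card V) powr c"
    and msg: "\<forall>u\<in>V. \<forall>v\<in>V. E u v \<longrightarrow> length (inp u (idf v)) \<le> K * (nat \<lceil>log 2 (real (card V))\<rceil> + 1)"
    and vV: "v \<in> V"
  shows "outf c K (card V) c (max_degree V E) (idf v) (inp v)
           (beep_hist (Pf c K) c V E idf inp (Tf c K (card V) (max_degree V E)) v)
         = {(idf u, inp u (idf v)) | u. u \<in> V \<and> E u v}"
proof -
  let ?n = "card V" and ?D = "max_degree V E"
  let ?Lg = "Lgf c ?n"
  let ?Nb = "(2::nat) ^ ?Lg" and ?M = "Mf c K ?n ?D" and ?W = "Wf c K ?n ?D"
    and ?Tp = "Tpf c K ?n ?D" and ?Pay = "Payf c K ?n ?D" and ?Bq = "Bqf c K ?n ?D"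
    and ?R = "Rf c K ?n ?D"
  let ?Q = "card ?Pay"
  let ?h = "beep_hist (Pf c K) c V E idf inp"
  have finV: "finite V" and Ein: "\<And>a b. E a b \<Longrightarrow> a \<in> V \<and> b \<in> V"
    and sym: "\<And>a b. E a b \<Longrightarrow> E b a" and irr: "\<And>a. \<not> E a a"
    using net unfolding network_def by auto
  have n1: "?n \<ge> 1" using finV vV by (metis One_nat_def Suc_leI card_gt_0_iff empty_iff)
  have deg: "\<forall>w\<in>V. card {u\<in>V. E w u} \<le> ?D" and Dn: "?D < ?n"
    using deg_facts[OF net vV] by auto
  have T2: "Tf c K ?n ?D = 2 * ?Tp" unfolding Tf_def using Dn by simp
  have ids: "\<And>w. w \<in> V \<Longrightarrow> idf w < ?Nb" using ids_bound[OF c1 n1] idb by blast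
  have R1: "?R \<ge> 1" unfolding Rf_def by simp
  have primes: "card {p. prime p \<and> p < ?M} \<ge> ?R" unfolding Mf_def by (rule cheb_primes[OF R1])
  have NbM: "?Nb * ?M \<le> 2 ^ ?W"
  proof -
    have "?Nb * ?M \<le> ?Nb * 2 ^ blen ?M" using blen_gt[of ?M] by simp
    then show ?thesis unfolding Wf_def by (simp add: power_add)
  qed
  have W1: "?W \<ge> 1"
  proof -
    have "?M \<ge> 1" unfolding Mf_def cheb_def by simp
    then have "blen ?M \<ge> 1" by (rule blen_pos)
    then show ?thesis unfolding Wf_def by simp
  qed
  have TpMW: "?Tp = ?M * ?M * ?W * 2" unfolding Tpf_def by simp
  have Nsub: "\<And>w. {u\<in>V. E w u} \<subseteq> V" by auto

  have heard0: "heard ?Nb ?M ?W (idf w) (?h ?Tp w) = idf ` {u\<in>V. E w u}" if wV: "w \<in> V" for w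
  proof -
    interpret ph: phase V E idf ?Nb ?M ?W "\<lambda>_. 0" w "?h ?Tp w"
    proof
      fix t assume t: "t < ?M * ?M * ?W * 2"
      then have tT: "t < ?Tp" using TpMW by simp
      show "?h ?Tp w ! t = (\<not> act ?Nb ?M ?W (idf w) 0 t \<and>
               (\<exists>w'\<in>V. E w w' \<and> act ?Nb ?M ?W (idf w') 0 t))"
        using hist_nth[OF tT] P_ph0[of "?h t _" c K ?n ?D] hist_len[of _ c V E idf inp t] tT
        by simp
    qed (use irr inj ids NbM W1 wV in auto)
    show ?thesis
    proof (rule ph.heard_eq)
      fix u assume u: "u \<in> V" "E w u"
      have "card {p. prime p \<and> p < ?M} \<le> card (ph.CP u) + card {w'\<in>V. E w w'} * ?Lg"
        using ph.CP_card[OF u _ finV, of ?Lg] ids by auto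
      also have "\<dots> \<le> card (ph.CP u) + ?D * ?Lg" using deg wV by simp
      finally have "card (ph.CP u) \<ge> 1" using primes unfolding Rf_def by linarith
      then show "ph.CP u \<noteq> {}" by auto
    qed
  qed

  define lst where "lst u = map (\<lambda>y. (y, inp u y)) (sorted_list_of_set (idf ` {w\<in>V. E u w}))" for u
  define Xf where "Xf w = X1f c K ?n ?D (idf w) (inp w) (?h ?Tp w)" for w
  have Xf_eq: "Xf u = encf c K ?n ?D (lst u)" if "u \<in> V" for u
    unfolding Xf_def X1f_def lst_def using heard0[OF that] by simp
  have fin_img: "finite (idf ` {w\<in>V. E u w})" for u using finV by simp
  have set_lst: "set (sorted_list_of_set (idf ` {w\<in>V. E u w})) = idf ` {w\<in>V. E u w}" for u
    using fin_img by simp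
  have lst_Pay: "lst u \<in> ?Pay" if uV: "u \<in> V" for u
  proof -
    have "length (lst u) = card (idf ` {w\<in>V. E u w})" unfolding lst_def by simp
    also have "\<dots> = card {w\<in>V. E u w}"
      using inj by (intro card_image) (auto intro: inj_on_subset)
    also have "\<dots> \<le> ?D" using deg uV by simp
    finally have len: "length (lst u) \<le> ?D" .
    have "\<forall>(x, m)\<in>set (lst u). x < ?Nb \<and> length m \<le> Lmf K ?n"
    proof
      fix pr assume "pr \<in> set (lst u)"
      then obtain w where w: "w \<in> V" "E u w" "pr = (idf w, inp u (idf w))"
        unfolding lst_def using set_lst by auto
      then show "case pr of (x, m) \<Rightarrow> x < ?Nb \<and> length m \<le> Lmf K ?n"
        using ids msg uV unfolding Lmf_def by auto
    qed
    then show ?thesis using len unfolding Payf_def by simp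
  qed
  have bij: "bij_betw (encf c K ?n ?D) ?Pay {0..<?Q}" by (rule enc_bij)
  have XQ: "Xf u < ?Q" if "u \<in> V" for u
    using Xf_eq[OF that] lst_Pay[OF that] bij_betwE[OF bij] by auto
  have QB: "?Q \<le> 2 ^ ?Bq" using card_Pay[of c K ?n ?D] by simp
  have inv: "the_inv_into ?Pay (encf c K ?n ?D) (Xf u) = lst u" if "u \<in> V" for u
    using Xf_eq[OF that] the_inv_into_f_f[OF bij_betw_imp_inj_on[OF bij] lst_Pay[OF that]] by simp
  have mo: "map_of (lst u) (idf v) = Some (inp u (idf v))" if "u \<in> V" "E u v" for u
  proof -
    have "idf v \<in> idf ` {w\<in>V. E u w}" using that vV by auto
    then show ?thesis unfolding lst_def map_of_map_restrict using set_lst by simp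
  qed

  define fl where "fl = drop ?Tp (?h (2 * ?Tp) v)"
  interpret ph1: phase V E idf ?Nb ?M ?W Xf v fl
  proof
    fix j assume j: "j < ?M * ?M * ?W * 2"
    then have jT: "j < ?Tp" using TpMW by simp
    have "fl ! j = ?h (2 * ?Tp) v ! (?Tp + j)"
      unfolding fl_def using hist_len[of _ c V E idf inp "2 * ?Tp" v] jT by simp
    also have "\<dots> = (\<not> Pf c K ?n c ?D (idf v) (inp v) (?h (?Tp + j) v) \<and>
      (\<exists>w\<in>V. E v w \<and> Pf c K ?n c ?D (idf w) (inp w) (?h (?Tp + j) w)))"
      using jT by (intro hist_nth) simp
    also have "\<dots> = (\<not> act ?Nb ?M ?W (idf v) (Xf v) j \<and> (\<exists>w\<in>V. E v w \<and> act ?Nb ?M ?W (idf w) (Xf w) j))"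
    proof -
      have "Pf c K ?n c ?D (idf w) (inp w) (?h (?Tp + j) w) = act ?Nb ?M ?W (idf w) (Xf w) j" for w
      proof -
        have l: "length (?h (?Tp + j) w) = ?Tp + j" by (rule hist_len)
        have tk: "take ?Tp (?h (?Tp + j) w) = ?h ?Tp w" by (rule hist_take) simp
        show ?thesis using P_ph1[of c K ?n ?D "?h (?Tp + j) w" c "idf w" "inp w"] l tk jT
          unfolding Xf_def by simp
      qed
      then show ?thesis by simp
    qed
    finally show "fl ! j = (\<not> act ?Nb ?M ?W (idf v) (Xf v) j \<and> (\<exists>w\<in>V. E v w \<and> act ?Nb ?M ?W (idf w) (Xf w) j))" .
  qed (use irr inj ids NbM W1 vV in auto)
  have cpB: "card (ph1.CP u) \<ge> ?Bq" if u: "u \<in> V" "E v u" for u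
  proof -
    have "card {p. prime p \<and> p < ?M} \<le> card (ph1.CP u) + card {w'\<in>V. E v w'} * ?Lg"
      using ph1.CP_card[OF u _ finV, of ?Lg] ids by auto
    also have "\<dots> \<le> card (ph1.CP u) + ?D * ?Lg" using deg vV by simp
    finally show ?thesis using primes unfolding Rf_def by linarith
  qed
  have heard1: "heard ?Nb ?M ?W (idf v) fl = idf ` {u\<in>V. E v u}"
  proof (rule ph1.heard_eq)
    fix u assume u: "u \<in> V" "E v u"
    have "card (ph1.CP u) \<ge> 1"
    proof -
      have "card {p. prime p \<and> p < ?M} \<le> card (ph1.CP u) + card {w'\<in>V. E v w'} * ?Lg"
        using ph1.CP_card[OF u _ finV, of ?Lg] ids by auto
      also have "\<dots> \<le> card (ph1.CP u) + ?D * ?Lg" using deg vV by simp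
      finally show ?thesis using primes unfolding Rf_def by linarith
    qed
    then show "ph1.CP u \<noteq> {}" by auto
  qed
  have dec1: "decX ?Nb ?M ?W (idf v) fl ?Q (idf u) = Xf u" if u: "u \<in> V" "E v u" for u
    by (rule ph1.dec_eq[OF u XQ[OF u(1)] QB cpB[OF u]])

  have "outf c K ?n c ?D (idf v) (inp v) (?h (Tf c K ?n ?D) v) =
     (\<lambda>y. (y, the (map_of (the_inv_into ?Pay (encf c K ?n ?D) (decX ?Nb ?M ?W (idf v) fl ?Q y)) (idf v))))
       ` heard ?Nb ?M ?W (idf v) fl"
    unfolding outf_def Let_def T2 fl_def by simp
  also have "\<dots> = (\<lambda>y. (y, the (map_of (the_inv_into ?Pay (encf c K ?n ?D) (decX ?Nb ?M ?W (idf v) fl ?Q y)) (idf v))))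
       ` (idf ` {u\<in>V. E v u})" using heard1 by simp
  also have "\<dots> = (\<lambda>u. (idf u, inp u (idf v))) ` {u\<in>V. E v u}"
    unfolding image_image
  proof (intro image_cong refl)
    fix u assume "u \<in> {u\<in>V. E v u}"
    then have u: "u \<in> V" "E v u" by auto
    then have "E u v" using sym by blast
    show "(idf u, the (map_of (the_inv_into ?Pay (encf c K ?n ?D) (decX ?Nb ?M ?W (idf v) fl ?Q (idf u))) (idf v)))
        = (idf u, inp u (idf v))"
      using dec1[OF u] inv[OF u(1)] mo[OF u(1) \<open>E u v\<close>] by simp
  qed
  also have "\<dots> = {(idf u, inp u (idf v)) | u. u \<in> V \<and> E u v}"
    using sym by blast
  finally show ?thesis .
qed

lemma time_nat:
  fixes K :: nat
  assumes c1: "c \<ge> 1" and n1: "n \<ge> 1" and Dn: "D < n"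
  defines "cc \<equiv> nat \<lceil>c\<rceil>"
  defines "g2 \<equiv> 2 * cc + 2 * K + 3"
  defines "g4 \<equiv> 4 * g2 * (g2 + 5) + 1"
  defines "g5 \<equiv> cc + 3 + g4"
  shows "Tf c K n D \<le> (D + 1)^2 * blen n ^ 5 * (4 * g4^2 * g5)"
proof -
  define b where "b = blen n"
  have b1: "b \<ge> 1" unfolding b_def using n1 by (rule blen_pos)
  have nb: "n < 2 ^ b" unfolding b_def by (rule blen_gt)
  have bD: "blen (D + 1) \<le> b" unfolding b_def using Dn by (intro blen_mono) simp
  have Lg: "Lgf c n = cc * b" unfolding Lgf_def cc_def b_def by simp
  have Lm: "Lmf K n \<le> K * (b + 1)"
  proof -
    have "log 2 (real n) < real b" using nb n1 by (intro log2_of_power_less) auto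
    then have "nat \<lceil>log 2 (real n)\<rceil> \<le> b" by linarith
    then show ?thesis unfolding Lmf_def by simp
  qed
  have Bq: "Bqf c K n D \<le> (D + 1) * (b * (cc + 2 * K + 2))"
  proof -
    have "Lgf c n + Lmf K n + 2 \<le> cc * b + K * (b + 1) + 2" using Lg Lm by simp
    also have "\<dots> \<le> b * (cc + 2 * K + 2)"
    proof -
      have e: "b * (cc + 2 * K + 2) = cc * b + K * b + K * b + 2 * b" by (simp add: algebra_simps)
      have "K \<le> K * b" using b1 by simp
      moreover have "K * (b + 1) = K * b + K" by simp
      ultimately show ?thesis unfolding e using b1 by linarith
    qed
    finally show ?thesis unfolding Bqf_def by (intro mult_le_mono2)
  qed
  have R: "Rf c K n D \<le> (D + 1) * (b * g2)"
  proof -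
    have "Rf c K n D \<le> D * (cc * b) + (D + 1) * (b * (cc + 2 * K + 2)) + 1"
      unfolding Rf_def using Lg Bq by simp
    also have "\<dots> \<le> (D + 1) * (cc * b) + (D + 1) * (b * (cc + 2 * K + 2)) + (D + 1) * b"
      using b1 by (intro add_mono) (auto intro: mult_le_mono1)
    also have "\<dots> = (D + 1) * (b * g2)" unfolding g2_def by (simp add: algebra_simps)
    finally show ?thesis .
  qed
  have bR: "blen (Rf c K n D) + 3 \<le> b * (g2 + 5)"
  proof -
    have "blen (Rf c K n D) \<le> blen ((D + 1) * (b * g2))" using R by (rule blen_mono)
    also have "\<dots> \<le> blen (D + 1) + (blen b + blen g2)"
      using blen_mult[of "D+1" "b * g2"] blen_mult[of b g2] by linarith
    also have "\<dots> \<le> b + (b + g2)" using bD blen_self[of b] blen_self[of g2] by linarith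
    finally have "blen (Rf c K n D) + 3 \<le> 2 * b + g2 + 3" by simp
    also have "\<dots> \<le> b * (g2 + 5)"
    proof -
      have e: "b * (g2 + 5) = b * g2 + 5 * b" by (simp add: algebra_simps)
      have "g2 \<le> b * g2" using b1 by simp
      then show ?thesis unfolding e using b1 by linarith
    qed
    finally show ?thesis .
  qed
  have M: "Mf c K n D \<le> (D + 1) * (b * (b * g4))"
  proof -
    have "Mf c K n D = 2 * (Rf c K n D * (2 * (blen (Rf c K n D) + 3))) + 1"
      unfolding Mf_def cheb_def by simp
    also have "\<dots> \<le> 2 * (((D + 1) * (b * g2)) * (2 * (b * (g2 + 5)))) + 1"
      using R bR by (intro add_mono mult_le_mono2 mult_mono) auto
    also have "\<dots> = (D + 1) * (b * (b * (4 * g2 * (g2 + 5)))) + 1" by (simp add: algebra_simps)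
    also have "\<dots> \<le> (D + 1) * (b * (b * g4))"
    proof -
      have "1 \<le> b * b" using b1 by (metis mult_le_mono nat_mult_1)
      then have "1 \<le> (D + 1) * (b * b)" by (metis le_add2 le_trans mult_le_mono1 nat_mult_1 add.commute)
      then show ?thesis unfolding g4_def by (simp add: algebra_simps)
    qed
    finally show ?thesis .
  qed
  have W: "Wf c K n D \<le> b * g5"
  proof -
    have "blen (Mf c K n D) \<le> blen ((D + 1) * (b * (b * g4)))" using M by (rule blen_mono)
    also have "\<dots> \<le> blen (D + 1) + (blen b + (blen b + blen g4))"
      using blen_mult[of "D+1" "b * (b * g4)"] blen_mult[of b "b * g4"] blen_mult[of b g4] by linarith
    also have "\<dots> \<le> b + (b + (b + g4))" using bD blen_self[of b] blen_self[of g4] by linarith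
    finally have "Wf c K n D \<le> cc * b + (3 * b + g4)" unfolding Wf_def Lg by simp
    also have "\<dots> \<le> b * g5"
    proof -
      have "g4 \<le> b * g4" using b1 by simp
      then show ?thesis unfolding g5_def by (simp add: algebra_simps)
    qed
    finally show ?thesis .
  qed
  have "Tf c K n D = 2 * (Mf c K n D * Mf c K n D * Wf c K n D * 2)"
    unfolding Tf_def Tpf_def using Dn by simp
  also have "\<dots> \<le> 2 * (((D + 1) * (b * (b * g4))) * ((D + 1) * (b * (b * g4))) * (b * g5) * 2)"
    using M W by (intro mult_le_mono1 mult_le_mono2 mult_mono) auto
  also have "\<dots> = (D + 1)^2 * b ^ 5 * (4 * g4^2 * g5)"
    by (simp add: algebra_simps power2_eq_square eval_nat_numeral)
  finally show ?thesis unfolding b_def .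
qed

lemma time_bound:
  assumes c1: "c \<ge> 1"
  shows "\<exists>(C::real) (k::nat). \<forall>n \<Delta>.
        real (Tf c K n \<Delta>) \<le> C * (real \<Delta> + 1)^2 * (log 2 (real n + 1))^k * log 2 (real \<Delta> + 2)"
proof -
  define cc where "cc = nat \<lceil>c\<rceil>"
  define g2 where "g2 = 2 * cc + 2 * K + 3"
  define g4 where "g4 = 4 * g2 * (g2 + 5) + 1"
  define g5 where "g5 = cc + 3 + g4"
  define G where "G = 4 * g4^2 * g5"
  show ?thesis
  proof (intro exI allI)
    fix n D :: nat
    have lD: "log 2 (real D + 2) \<ge> 1"
    proof -
      have "(2::nat) ^ 1 \<le> D + 2" by simp
      then have "real 1 \<le> log 2 (real (D + 2))" by (intro le_log2_of_power)
      then show ?thesis by simp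
    qed
    show "real (Tf c K n D) \<le> (32 * real G) * (real D + 1)^2 * (log 2 (real n + 1))^5 * log 2 (real D + 2)"
    proof (cases "D < n")
      case False
      then have "Tf c K n D = 0" unfolding Tf_def by simp
      moreover have "log 2 (real n + 1) \<ge> 0" by simp
      ultimately show ?thesis using lD by simp
    next
      case True
      then have n1: "n \<ge> 1" by simp
      define L where "L = log 2 (real n + 1)"
      have L1: "L \<ge> 1"
      proof -
        have "(2::nat) ^ 1 \<le> n + 1" using n1 by simp
        then have "real 1 \<le> log 2 (real (n + 1))" by (intro le_log2_of_power)
        then show ?thesis unfolding L_def by simp
      qed
      have bL: "real (blen n) \<le> 2 * L"
      proof -
        have "2 ^ (blen n - 1) \<le> n" using n1 by (rule blen_ge)
        then have "2 ^ (blen n - 1) \<le> n + 1" by simp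
        then have "real (blen n - 1) \<le> log 2 (real (n + 1))" by (intro le_log2_of_power)
        moreover have "real (n + 1) = real n + 1" by simp
        ultimately have "real (blen n - 1) \<le> L" unfolding L_def by metis
        then have "real (blen n) - 1 \<le> L" using blen_pos[OF n1] by simp
        then show ?thesis using L1 by simp
      qed
      have "Tf c K n D \<le> (D + 1)^2 * blen n ^ 5 * G"
        using time_nat[OF c1 n1 True, of K] unfolding G_def g5_def g4_def g2_def cc_def by simp
      then have "real (Tf c K n D) \<le> real ((D + 1)^2 * blen n ^ 5 * G)"
        by (simp only: of_nat_le_iff)
      also have "real ((D + 1)^2 * blen n ^ 5 * G) = (real D + 1)^2 * real (blen n) ^ 5 * real G"
        by simp
      also have "\<dots> \<le> (real D + 1)^2 * (2 * L) ^ 5 * real G"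
        using bL by (intro mult_right_mono mult_left_mono power_mono) auto
      also have "\<dots> = (32 * real G) * (real D + 1)^2 * L ^ 5"
        by (simp add: power_mult_distrib)
      also have "\<dots> \<le> (32 * real G) * (real D + 1)^2 * L ^ 5 * log 2 (real D + 2)"
      proof -
        have X0: "0 \<le> (32 * real G) * (real D + 1)^2 * L ^ 5" using L1 by simp
        show ?thesis using mult_left_mono[OF lD X0] by simp
      qed
      finally show ?thesis unfolding L_def .
    qed
  qed
qed

theorem theorem6:
  fixes c :: real and K :: nat
  assumes "c \<ge> 1"
  shows "\<exists>(P :: protocol)
            (out :: nat \<Rightarrow> real \<Rightarrow> nat \<Rightarrow> nat \<Rightarrow> (nat \<Rightarrow> bool list) \<Rightarrow> bool list \<Rightarrow> (nat \<times> bool list) set)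
            (T :: nat \<Rightarrow> nat \<Rightarrow> nat).
    (\<exists>(C::real) (k::nat). \<forall>n \<Delta>.
        real (T n \<Delta>) \<le> C * (real \<Delta> + 1)^2 * (log 2 (real n + 1))^k * log 2 (real \<Delta> + 2))
  \<and> (\<forall>V E (idf :: nat \<Rightarrow> nat) (inp :: nat \<Rightarrow> nat \<Rightarrow> bool list).
        network V E
      \<and> inj_on idf V
      \<and> (\<forall>v\<in>V. 1 \<le> idf v \<and> real (idf v) \<le> real (card V) powr c)
      \<and> (\<forall>u\<in>V. \<forall>v\<in>V. E u v \<longrightarrow>
            length (inp u (idf v)) \<le> K * (nat \<lceil>log 2 (real (card V))\<rceil> + 1))
      \<longrightarrow> (\<forall>v\<in>V.
            out (card V) c (max_degree V E) (idf v) (inp v)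
                (beep_hist P c V E idf inp (T (card V) (max_degree V E)) v)
            = {(idf u, inp u (idf v)) | u. u \<in> V \<and> E u v}))"
  proof -
  obtain C k where Ck: "\<forall>n \<Delta>. real (Tf c K n \<Delta>) \<le> C * (real \<Delta> + 1)^2 * (log 2 (real n + 1))^k * log 2 (real \<Delta> + 2)"
    using time_bound[OF assms, of K] by blast
  show ?thesis
  proof (intro exI conjI)
    show "\<forall>n \<Delta>. real (Tf c K n \<Delta>) \<le> C * (real \<Delta> + 1)^2 * (log 2 (real n + 1))^k * log 2 (real \<Delta> + 2)"
      by (rule Ck)
    show "\<forall>V E (idf :: nat \<Rightarrow> nat) (inp :: nat \<Rightarrow> nat \<Rightarrow> bool list).
        network V E
      \<and> inj_on idf V
      \<and> (\<forall>v\<in>V. 1 \<le> idf v \<and> real (idf v) \<le> real (card V) powr c)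
      \<and> (\<forall>u\<in>V. \<forall>v\<in>V. E u v \<longrightarrow>
            length (inp u (idf v)) \<le> K * (nat \<lceil>log 2 (real (card V))\<rceil> + 1))
      \<longrightarrow> (\<forall>v\<in>V.
            outf c K (card V) c (max_degree V E) (idf v) (inp v)
                (beep_hist (Pf c K) c V E idf inp (Tf c K (card V) (max_degree V E)) v)
            = {(idf u, inp u (idf v)) | u. u \<in> V \<and> E u v})"
    proof (intro allI impI ballI)
      fix V E idf inp v
      assume h: "network V E \<and> inj_on (idf :: nat \<Rightarrow> nat) V
      \<and> (\<forall>v\<in>V. 1 \<le> idf v \<and> real (idf v) \<le> real (card V) powr c)
      \<and> (\<forall>u\<in>V. \<forall>v\<in>V. E u v \<longrightarrow>
            length ((inp :: nat \<Rightarrow> nat \<Rightarrow> bool list) u (idf v)) \<le> K * (nat \<lceil>log 2 (real (card V))\<rceil> + 1))"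
        and vV: "v \<in> V"
      show "outf c K (card V) c (max_degree V E) (idf v) (inp v)
                (beep_hist (Pf c K) c V E idf inp (Tf c K (card V) (max_degree V E)) v)
            = {(idf u, inp u (idf v)) | u. u \<in> V \<and> E u v}"
        using main_correct[OF assms] h vV by blast
    qed
  qed
qed

end
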